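(* Let $\Sigma=(I,X,\mathcal U,\phi,Y,h)$ be a forward complete control system with outputs. Then the following are equivalent: (1) $\Sigma$ is IOS and OL; (2) $\Sigma$ is OUAG, OL, and $h$ is $\mathcal K$-bounded; (3) $\Sigma$ is OULIM, OL, and $h$ is $\mathcal K$-bounded.
   Context: Let $I\in\{\mathbb N_0,\mathbb R_0^+\}$. A forward complete control system with outputs $\Sigma=(I,X,\mathcal U,\phi,Y,h)$ consists of: a normed space $(X,\|\cdot\|_X)$; a vector space $U$ and a normed linear subspace $(\mathcal U,\|\cdot\|_{\mathcal U})$ of $\{u:I\to U\}$ such that for all $u\in\mathcal U,\tau\in I$, $u(\cdot+\tau)\in\mathcal U$ with $\|u(\cdot+\tau)\|_{\mathcal U}\le\|u\|_{\mathcal U}$, and for $t_2\ge t_1\ge 0$ the function $u|_{[t_1,t_2]}$ ($u$ on $[t_1,t_2]$, $0$ elsewhere) lies in $\mathcal U$ with norm $\le\|u\|_{\mathcal U}$; a map $\phi:I\times X\times\mathcal U\to X$ with $\phi(0,x,u)=x$, causality (if $u,\tilde u$ agree on $[0,t]$ then $\phi(t,x,u)=\phi(t,x,\tilde u)$), and cocycle property $\phi(t+s,x,u)=\phi(s,\phi(t,x,u),u(t+\cdot))$; a normed space $Y$ and $h:X\times U\to Y$. Write $y(t,x,u)=h(\phi(t,x,u),u(t))$, $B_r=\{x:\|x\|_X<r\}$, $B_{r,\mathcal U}=\{u:\|u\|_{\mathcal U}<r\}$. $\mathcal K,\mathcal K_\infty,\mathcal{KL}$ are the standard comparison function classes. IOS: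 $\exists\beta\in\mathcal{KL},\gamma\in\mathcal K_\infty$ with $\|y(t,x,u)\|_Y\le\beta(\|x\|_X,t)+\gamma(\|u\|_{\mathcal U})$ for all $x\in X,u\in\mathcal U,t\in I$. OL: $\exists\sigma,\gamma\in\mathcal K_\infty$ with $\|y(t,x,u)\|_Y\le\sigma(\|y(0,x,u)\|_Y)+\gamma(\|u\|_{\mathcal U})$ for all $x,u,t$. OUAG: $\exists\gamma\in\mathcal K_\infty$ such that for all $\varepsilon,r,s>0$ there is $\tau\in I$ with $\|y(t,x,u)\|_Y\le\varepsilon+\gamma(\|u\|_{\mathcal U})$ for all $x\in B_r,u\in B_{s,\mathcal U},t\ge\tau$. OULIM: $\exists\gamma\in\mathcal K_\infty$ such that for all $\varepsilon,r,s>0$ there is $\tau\in I$ such that for all $x\in B_r,u\in B_{s,\mathcal U}$ there exists $t\in I$, $t\le\tau$, with $\|y(t,x,u)\|_Y\le\varepsilon+\gamma(\|u\|_{\mathcal U})$. $h$ is $\mathcal K$-bounded: there exist $\sigma_1,\gamma_1\in\mathcal K$ with $\|h(x,u(0))\|_Y\le\sigma_1(\|x\|_X)+\gamma_1(\|u\|_{\mathcal U})$ for all $x\in X$, $u\in\mathcal U$. *)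

theory Defs
  imports "HOL-Analysis.Analysis"
begin

definition class_K :: "(real \<Rightarrow> real) \<Rightarrow> bool" where
  "class_K \<gamma> \<longleftrightarrow> continuous_on {0..} \<gamma> \<and> \<gamma> 0 = 0 \<and> strict_mono_on {0..} \<gamma>"

definition class_Kinf :: "(real \<Rightarrow> real) \<Rightarrow> bool" where
  "class_Kinf \<gamma> \<longleftrightarrow> class_K \<gamma> \<and> filterlim \<gamma> at_top at_top"

definition class_L :: "(real \<Rightarrow> real) \<Rightarrow> bool" where
  "class_L \<gamma> \<longleftrightarrow> continuous_on {0..} \<gamma> \<and> strict_antimono_on {0..} \<gamma>
      \<and> (\<gamma> \<longlongrightarrow> 0) at_top"

definition class_KL :: "(real \<Rightarrow> real \<Rightarrow> real) \<Rightarrow> bool" where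
  "class_KL \<beta> \<longleftrightarrow> (\<forall>t\<ge>0. class_K (\<lambda>r. \<beta> r t)) \<and> (\<forall>r>0. class_L (\<lambda>t. \<beta> r t))"

text \<open>Time set T (either the naturals or the nonnegative reals, viewed inside the reals).
  Inputs are functions real => 'u that vanish outside T.\<close>

definition shift_inp :: "real set \<Rightarrow> real \<Rightarrow> (real \<Rightarrow> 'u::real_vector) \<Rightarrow> real \<Rightarrow> 'u" where
  "shift_inp T \<tau> u = (\<lambda>t. if t \<in> T then u (t + \<tau>) else 0)"

definition restr_inp :: "real set \<Rightarrow> real \<Rightarrow> real \<Rightarrow> (real \<Rightarrow> 'u::real_vector) \<Rightarrow> real \<Rightarrow> 'u" where
  "restr_inp T t1 t2 u = (\<lambda>t. if t \<in> T \<and> t1 \<le> t \<and> t \<le> t2 then u t else 0)"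

definition fc_control_system ::
  "real set \<Rightarrow> (real \<Rightarrow> 'u::real_vector) set \<Rightarrow> ((real \<Rightarrow> 'u) \<Rightarrow> real)
    \<Rightarrow> (real \<Rightarrow> 'x::real_normed_vector \<Rightarrow> (real \<Rightarrow> 'u) \<Rightarrow> 'x) \<Rightarrow> bool" where
  "fc_control_system T Uset nU \<phi> \<longleftrightarrow>
     (T = \<nat> \<or> T = {0..}) \<and>
     \<comment> \<open>inputs are functions on T (extended by 0)\<close>
     (\<forall>u\<in>Uset. \<forall>t. t \<notin> T \<longrightarrow> u t = 0) \<and>
     \<comment> \<open>Uset is a linear subspace, nU is a norm on it\<close>
     (\<lambda>t. 0) \<in> Uset \<and> (\<forall>u\<in>Uset. \<forall>v\<in>Uset. (\<lambda>t. u t + v t) \<in> Uset) \<and> (\<forall>a. \<forall>u\<in>Uset. (\<lambda>t. a *\<^sub>R u t) \<in> Uset) \<and>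
     (\<forall>u\<in>Uset. nU u \<ge> 0) \<and> (\<forall>u\<in>Uset. nU u = 0 \<longleftrightarrow> u = (\<lambda>t. 0)) \<and>
     (\<forall>a. \<forall>u\<in>Uset. nU (\<lambda>t. a *\<^sub>R u t) = \<bar>a\<bar> * nU u) \<and>
     (\<forall>u\<in>Uset. \<forall>v\<in>Uset. nU (\<lambda>t. u t + v t) \<le> nU u + nU v) \<and>
     \<comment> \<open>shift axiom\<close>
     (\<forall>u\<in>Uset. \<forall>\<tau>\<in>T. shift_inp T \<tau> u \<in> Uset \<and> nU (shift_inp T \<tau> u) \<le> nU u) \<and>
     \<comment> \<open>restriction axiom\<close>
     (\<forall>u\<in>Uset. \<forall>t1\<in>T. \<forall>t2\<in>T. t1 \<le> t2 \<longrightarrow>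
        restr_inp T t1 t2 u \<in> Uset \<and> nU (restr_inp T t1 t2 u) \<le> nU u) \<and>
     \<comment> \<open>identity property\<close>
     (\<forall>x. \<forall>u\<in>Uset. \<phi> 0 x u = x) \<and>
     \<comment> \<open>causality\<close>
     (\<forall>t\<in>T. \<forall>x. \<forall>u\<in>Uset. \<forall>v\<in>Uset. (\<forall>s\<in>T. s \<le> t \<longrightarrow> u s = v s) \<longrightarrow> \<phi> t x u = \<phi> t x v) \<and>
     \<comment> \<open>cocycle property\<close>
     (\<forall>t\<in>T. \<forall>s\<in>T. \<forall>x. \<forall>u\<in>Uset. \<phi> (t + s) x u = \<phi> s (\<phi> t x u) (shift_inp T t u))"

definition outp ::
  "(real \<Rightarrow> 'x \<Rightarrow> (real \<Rightarrow> 'u) \<Rightarrow> 'x) \<Rightarrow> ('x \<Rightarrow> 'u \<Rightarrow> 'y) \<Rightarrow> real \<Rightarrow> 'x \<Rightarrow> (real \<Rightarrow> 'u) \<Rightarrow> 'y" where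
  "outp \<phi> h t x u = h (\<phi> t x u) (u t)"

definition IOS :: "real set \<Rightarrow> (real \<Rightarrow> 'u::real_vector) set \<Rightarrow> ((real \<Rightarrow> 'u) \<Rightarrow> real)
    \<Rightarrow> (real \<Rightarrow> 'x::real_normed_vector \<Rightarrow> (real \<Rightarrow> 'u) \<Rightarrow> 'x) \<Rightarrow> ('x \<Rightarrow> 'u \<Rightarrow> 'y::real_normed_vector) \<Rightarrow> bool" where
  "IOS T Uset nU \<phi> h \<longleftrightarrow> (\<exists>\<beta> \<gamma>. class_KL \<beta> \<and> class_Kinf \<gamma> \<and>
     (\<forall>x. \<forall>u\<in>Uset. \<forall>t\<in>T. norm (outp \<phi> h t x u) \<le> \<beta> (norm x) t + \<gamma> (nU u)))"

definition OL :: "real set \<Rightarrow> (real \<Rightarrow> 'u::real_vector) set \<Rightarrow> ((real \<Rightarrow> 'u) \<Rightarrow> real)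
    \<Rightarrow> (real \<Rightarrow> 'x::real_normed_vector \<Rightarrow> (real \<Rightarrow> 'u) \<Rightarrow> 'x) \<Rightarrow> ('x \<Rightarrow> 'u \<Rightarrow> 'y::real_normed_vector) \<Rightarrow> bool" where
  "OL T Uset nU \<phi> h \<longleftrightarrow> (\<exists>\<sigma> \<gamma>. class_Kinf \<sigma> \<and> class_Kinf \<gamma> \<and>
     (\<forall>x. \<forall>u\<in>Uset. \<forall>t\<in>T. norm (outp \<phi> h t x u) \<le> \<sigma> (norm (outp \<phi> h 0 x u)) + \<gamma> (nU u)))"

definition OUAG :: "real set \<Rightarrow> (real \<Rightarrow> 'u::real_vector) set \<Rightarrow> ((real \<Rightarrow> 'u) \<Rightarrow> real)
    \<Rightarrow> (real \<Rightarrow> 'x::real_normed_vector \<Rightarrow> (real \<Rightarrow> 'u) \<Rightarrow> 'x) \<Rightarrow> ('x \<Rightarrow> 'u \<Rightarrow> 'y::real_normed_vector) \<Rightarrow> bool" where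
  "OUAG T Uset nU \<phi> h \<longleftrightarrow> (\<exists>\<gamma>. class_Kinf \<gamma> \<and>
     (\<forall>\<epsilon>>0. \<forall>r>0. \<forall>s>0. \<exists>\<tau>\<in>T. \<forall>x. \<forall>u\<in>Uset. \<forall>t\<in>T.
        norm x < r \<longrightarrow> nU u < s \<longrightarrow> t \<ge> \<tau> \<longrightarrow> norm (outp \<phi> h t x u) \<le> \<epsilon> + \<gamma> (nU u)))"

definition OULIM :: "real set \<Rightarrow> (real \<Rightarrow> 'u::real_vector) set \<Rightarrow> ((real \<Rightarrow> 'u) \<Rightarrow> real)
    \<Rightarrow> (real \<Rightarrow> 'x::real_normed_vector \<Rightarrow> (real \<Rightarrow> 'u) \<Rightarrow> 'x) \<Rightarrow> ('x \<Rightarrow> 'u \<Rightarrow> 'y::real_normed_vector) \<Rightarrow> bool" where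
  "OULIM T Uset nU \<phi> h \<longleftrightarrow> (\<exists>\<gamma>. class_Kinf \<gamma> \<and>
     (\<forall>\<epsilon>>0. \<forall>r>0. \<forall>s>0. \<exists>\<tau>\<in>T. \<forall>x. \<forall>u\<in>Uset.
        norm x < r \<longrightarrow> nU u < s \<longrightarrow>
        (\<exists>t\<in>T. t \<le> \<tau> \<and> norm (outp \<phi> h t x u) \<le> \<epsilon> + \<gamma> (nU u))))"

definition K_bounded :: "(real \<Rightarrow> 'u::real_vector) set \<Rightarrow> ((real \<Rightarrow> 'u) \<Rightarrow> real)
    \<Rightarrow> ('x::real_normed_vector \<Rightarrow> 'u \<Rightarrow> 'y::real_normed_vector) \<Rightarrow> bool" where
  "K_bounded Uset nU h \<longleftrightarrow> (\<exists>\<sigma>1 \<gamma>1. class_K \<sigma>1 \<and> class_K \<gamma>1 \<and>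
     (\<forall>x. \<forall>u\<in>Uset. norm (h x (u 0)) \<le> \<sigma>1 (norm x) + \<gamma>1 (nU u)))"

end

theory Submission
  imports Defs
begin

section \<open>Comparison function lemmas\<close>

lemma K_mono: "class_K g \<Longrightarrow> 0 \<le> a \<Longrightarrow> a \<le> b \<Longrightarrow> g a \<le> g b"
  unfolding class_K_def monotone_on_def
  by (metis atLeast_iff order.order_iff_strict order_trans)

lemma K_strict: "class_K g \<Longrightarrow> 0 \<le> a \<Longrightarrow> a < b \<Longrightarrow> g a < g b"
  unfolding class_K_def monotone_on_def by auto

lemma K_nonneg: "class_K g \<Longrightarrow> 0 \<le> a \<Longrightarrow> 0 \<le> g a"
  using K_mono[of g 0 a] by (simp add: class_K_def)

lemma Kinf_K: "class_Kinf g \<Longrightarrow> class_K g"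
  by (simp add: class_Kinf_def)

lemma K_comp:
  assumes f: "class_K f" and g: "class_K g"
  shows "class_K (\<lambda>r. f (g r))"
proof -
  have gS: "g ` {0..} \<subseteq> {0..}" using K_nonneg[OF g] by auto
  have "continuous_on {0..} (\<lambda>r. f (g r))"
    using continuous_on_compose2[of "{0..}" f "{0..}" g] f g gS
    by (auto simp: class_K_def)
  moreover have "f (g 0) = 0" using f g by (simp add: class_K_def)
  moreover have "strict_mono_on {0..} (\<lambda>r. f (g r))"
    by (rule strict_mono_onI) (use K_strict[OF f] K_strict[OF g] K_nonneg[OF g] in auto)
  ultimately show ?thesis by (simp add: class_K_def)
qed

lemma K_add:
  assumes f: "class_K f" and g: "class_K g"
  shows "class_K (\<lambda>r. f r + g r)"
proof -
  have "continuous_on {0..} (\<lambda>r. f r + g r)"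
    using f g by (auto simp: class_K_def intro!: continuous_intros)
  moreover have "strict_mono_on {0..} (\<lambda>r. f r + g r)"
    by (rule strict_mono_onI) (use K_strict[OF f] K_strict[OF g] in \<open>auto intro: add_strict_mono\<close>)
  ultimately show ?thesis using f g by (simp add: class_K_def)
qed

lemma K_scale:
  assumes f: "class_K f" and c: "c > 0"
  shows "class_K (\<lambda>r. c * f r)"
proof -
  have "continuous_on {0..} (\<lambda>r. c * f r)"
    using f by (auto simp: class_K_def intro!: continuous_intros)
  moreover have "strict_mono_on {0..} (\<lambda>r. c * f r)"
    by (rule strict_mono_onI) (use K_strict[OF f] c in auto)
  ultimately show ?thesis using f by (simp add: class_K_def)
qed

lemma K_lin: "c > 0 \<Longrightarrow> class_K (\<lambda>r. c * r)"
  unfolding class_K_def by (auto intro!: continuous_intros strict_mono_onI)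

lemma Kinf_add:
  assumes f: "class_Kinf f" and g: "class_K g"
  shows "class_Kinf (\<lambda>r. f r + g r)"
proof -
  have "filterlim (\<lambda>r. f r + g r) at_top at_top"
  proof (rule filterlim_at_top_mono[OF _ ])
    show "filterlim f at_top at_top" using f by (simp add: class_Kinf_def)
    show "\<forall>\<^sub>F x in at_top. f x \<le> f x + g x"
      using eventually_ge_at_top[of "0::real"] by eventually_elim (use K_nonneg[OF g] in auto)
  qed
  then show ?thesis using K_add[OF Kinf_K[OF f] g] by (simp add: class_Kinf_def)
qed

lemma Kinf_add2:
  assumes f: "class_K f" and g: "class_Kinf g"
  shows "class_Kinf (\<lambda>r. f r + g r)"
  using Kinf_add[OF g f] by (simp add: add.commute)

lemma K_split: "class_K f \<Longrightarrow> 0 \<le> a \<Longrightarrow> 0 \<le> b \<Longrightarrow> f (a + b) \<le> f (2*a) + f (2*b)"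
proof -
  assume f: "class_K f" and a: "0 \<le> a" and b: "0 \<le> b"
  show ?thesis
  proof (cases "a \<le> b")
    case True
    then have "f (a+b) \<le> f (2*b)" using K_mono[OF f, of "a+b" "2*b"] a b by auto
    then show ?thesis using K_nonneg[OF f, of "2*a"] a by auto
  next
    case False
    then have "f (a+b) \<le> f (2*a)" using K_mono[OF f, of "a+b" "2*a"] a b by auto
    then show ?thesis using K_nonneg[OF f, of "2*b"] b by auto
  qed
qed

section \<open>Piecewise linear interpolation\<close>

definition clamp01 :: "real \<Rightarrow> real" where "clamp01 x = max 0 (min 1 x)"

definition interp :: "(nat \<Rightarrow> real) \<Rightarrow> real \<Rightarrow> real" where
  "interp a t = a (nat \<lceil>t\<rceil>) + (\<Sum>n<nat \<lceil>t\<rceil>. (a n - a (Suc n)) * clamp01 (real n + 1 - t))"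

lemma continuous_clamp01: "continuous_on S (\<lambda>t. clamp01 (c - t))"
  unfolding clamp01_def by (intro continuous_intros)

lemma interp_eq:
  assumes "t \<le> real M"
  shows "interp a t = a M + (\<Sum>n<M. (a n - a (Suc n)) * clamp01 (real n + 1 - t))"
proof -
  define N where "N = nat \<lceil>t\<rceil>"
  have NM: "N \<le> M" using assms unfolding N_def by (simp add: nat_le_iff ceiling_le_iff)
  have tN: "t \<le> real N" unfolding N_def by linarith
  have "\<forall>k. interp a t = a (N+k) + (\<Sum>n<N+k. (a n - a (Suc n)) * clamp01 (real n + 1 - t))"
  proof
    fix k show "interp a t = a (N+k) + (\<Sum>n<N+k. (a n - a (Suc n)) * clamp01 (real n + 1 - t))"
    proof (induction k)
      case 0 then show ?case by (simp add: interp_def N_def)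
    next
      case (Suc k)
      have "clamp01 (real (N+k) + 1 - t) = 1" using tN by (simp add: clamp01_def)
      then show ?case using Suc by simp
    qed
  qed
  from this[rule_format, of "M - N"] NM show ?thesis by simp
qed

lemma interp_seg:
  assumes "real k \<le> t" "t \<le> real k + 1"
  shows "interp a t = (real k + 1 - t) * a k + (t - real k) * a (Suc k)"
proof -
  have 1: "interp a t = a (Suc k) + (\<Sum>n<Suc k. (a n - a (Suc n)) * clamp01 (real n + 1 - t))"
    using assms by (intro interp_eq) simp
  have "(\<Sum>n<k. (a n - a (Suc n)) * clamp01 (real n + 1 - t)) = 0"
  proof (intro sum.neutral ballI)
    fix n assume "n \<in> {..<k}"
    then have "real n + 1 \<le> real k" by simp
    then have "clamp01 (real n + 1 - t) = 0" using assms by (simp add: clamp01_def)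
    then show "(a n - a (Suc n)) * clamp01 (real n + 1 - t) = 0" by simp
  qed
  then have "(\<Sum>n<Suc k. (a n - a (Suc n)) * clamp01 (real n + 1 - t)) = (a k - a (Suc k)) * (real k + 1 - t)"
    using assms by (simp add: clamp01_def)
  with 1 show ?thesis by (simp add: algebra_simps)
qed

lemma interp_floor:
  assumes "0 \<le> t"
  shows "interp a t = (real (nat \<lfloor>t\<rfloor>) + 1 - t) * a (nat \<lfloor>t\<rfloor>) + (t - real (nat \<lfloor>t\<rfloor>)) * a (Suc (nat \<lfloor>t\<rfloor>))"
  using assms by (intro interp_seg) linarith+

lemma interp_cont: "continuous_on UNIV (interp a)"
proof (rule continuous_at_imp_continuous_on, safe)
  fix t0 :: real
  define M where "M = Suc (nat \<lceil>t0\<rceil>)"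
  have t0M: "t0 < real M" unfolding M_def by linarith
  have "continuous_on {..<real M} (\<lambda>t. a M + (\<Sum>n<M. (a n - a (Suc n)) * clamp01 (real n + 1 - t)))"
    by (intro continuous_intros continuous_clamp01)
  then have "continuous_on {..<real M} (interp a)"
    by (rule continuous_on_cong[THEN iffD1, rotated 2]) (auto intro!: interp_eq[symmetric])
  then show "isCont (interp a) t0"
    using t0M by (simp add: continuous_on_eq_continuous_at)
qed

lemma interp_mono_seq:
  assumes "\<And>n. a n \<le> b n" "0 \<le> t"
  shows "interp a t \<le> interp b t"
  using assms(2) unfolding interp_floor[OF assms(2), of a] interp_floor[OF assms(2), of b]
  by (intro add_mono mult_left_mono assms(1)) linarith+

lemma interp_between:
  assumes "0 \<le> t"
  shows "min (a (nat \<lfloor>t\<rfloor>)) (a (Suc (nat \<lfloor>t\<rfloor>))) \<le> interp a t"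
    and "interp a t \<le> max (a (nat \<lfloor>t\<rfloor>)) (a (Suc (nat \<lfloor>t\<rfloor>)))"
proof -
  define k where "k = nat \<lfloor>t\<rfloor>"
  define w where "w = t - real k"
  have w: "0 \<le> w" "w \<le> 1" unfolding w_def k_def using assms by linarith+
  have e: "interp a t = (1 - w) * a k + w * a (Suc k)"
    unfolding interp_floor[OF assms] k_def[symmetric] w_def by simp
  have "(1 - w) * min (a k) (a (Suc k)) + w * min (a k) (a (Suc k)) \<le> (1 - w) * a k + w * a (Suc k)"
    using w by (intro add_mono mult_left_mono) auto
  then show "min (a (nat \<lfloor>t\<rfloor>)) (a (Suc (nat \<lfloor>t\<rfloor>))) \<le> interp a t"
    unfolding e k_def[symmetric] by (simp add: algebra_simps)
  have "(1 - w) * a k + w * a (Suc k) \<le> (1 - w) * max (a k) (a (Suc k)) + w * max (a k) (a (Suc k))"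
    using w by (intro add_mono mult_left_mono) auto
  then show "interp a t \<le> max (a (nat \<lfloor>t\<rfloor>)) (a (Suc (nat \<lfloor>t\<rfloor>)))"
    unfolding e k_def[symmetric] by (simp add: algebra_simps)
qed

lemma clamp01_mono: "x \<le> y \<Longrightarrow> clamp01 x \<le> clamp01 y"
  unfolding clamp01_def by auto

lemma interp_antimono:
  assumes "\<And>n. a (Suc n) \<le> a n" "s \<le> t"
  shows "interp a t \<le> interp a s"
proof -
  define M where "M = nat \<lceil>t\<rceil>"
  have tM: "t \<le> real M" "s \<le> real M" unfolding M_def using assms(2) by linarith+
  show ?thesis
    unfolding interp_eq[OF tM(1)] interp_eq[OF tM(2)]
    using assms by (intro add_left_mono sum_mono mult_left_mono clamp01_mono) auto
qed

lemma interp_mono: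
  assumes "\<And>n. a n \<le> a (Suc n)" "s \<le> t"
  shows "interp a s \<le> interp a t"
proof -
  define M where "M = nat \<lceil>t\<rceil>"
  have tM: "t \<le> real M" "s \<le> real M" unfolding M_def using assms(2) by linarith+
  show ?thesis
    unfolding interp_eq[OF tM(1)] interp_eq[OF tM(2)]
    using assms by (intro add_left_mono sum_mono mult_left_mono_neg clamp01_mono) auto
qed

section \<open>Constructing a KL bound\<close>

lemma KL_bound:
  fixes v nx tm :: "'a \<Rightarrow> real"
  assumes sig: "class_K \<sigma>"
    and nn: "\<And>p. p \<in> S \<Longrightarrow> 0 \<le> nx p \<and> 0 \<le> tm p"
    and bnd: "\<And>p. p \<in> S \<Longrightarrow> v p \<le> \<sigma> (nx p)"
    and dec: "\<And>\<epsilon> R. \<epsilon> > 0 \<Longrightarrow> \<exists>\<tau>. \<forall>p\<in>S. nx p \<le> R \<longrightarrow> \<tau> \<le> tm p \<longrightarrow> v p \<le> \<epsilon>"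
  shows "\<exists>\<beta>. class_KL \<beta> \<and> (\<forall>p\<in>S. v p \<le> \<beta> (nx p) (tm p))"
proof -
  define A where "A m n = insert 0 {v p | p. p \<in> S \<and> nx p \<le> real m \<and> real n - 1 \<le> tm p}" for m n :: nat
  define W where "W m n = Sup (A m n)" for m n
  have Ane: "A m n \<noteq> {}" for m n unfolding A_def by auto
  have Abdd: "bdd_above (A m n)" for m n
  proof (rule bdd_aboveI[of _ "\<sigma> (real m)"])
    fix y assume "y \<in> A m n"
    then show "y \<le> \<sigma> (real m)"
      unfolding A_def using K_nonneg[OF sig, of "real m"]
      by (auto intro: order_trans[OF bnd K_mono[OF sig]] dest: nn)
  qed
  have W0: "0 \<le> W m n" for m n unfolding W_def by (rule cSup_upper[OF _ Abdd]) (simp add: A_def)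
  have W5: "v p \<le> W m n" if "p \<in> S" "nx p \<le> real m" "real n - 1 \<le> tm p" for p m n
    unfolding W_def by (rule cSup_upper[OF _ Abdd]) (use that in \<open>auto simp: A_def\<close>)
  have W2: "W m n \<le> W m' n" if "m \<le> m'" for m m' n
    unfolding W_def by (rule cSup_subset_mono[OF Ane Abdd]) (use that in \<open>auto simp: A_def\<close>)
  have W3: "W m (Suc n) \<le> W m n" for m n
    unfolding W_def by (rule cSup_subset_mono[OF Ane Abdd]) (auto simp: A_def)
  have W3': "W m n' \<le> W m n" if "n \<le> n'" for m n n'
    using that by (induction n' rule: dec_induct) (auto intro: order_trans[OF W3])
  have W4: "\<exists>N. \<forall>n\<ge>N. W m n \<le> \<epsilon>" if eps: "\<epsilon> > 0" for m \<epsilon>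
  proof -
    obtain \<tau> where \<tau>: "\<forall>p\<in>S. nx p \<le> real m \<longrightarrow> \<tau> \<le> tm p \<longrightarrow> v p \<le> \<epsilon>"
      using dec[OF eps, of "real m"] by blast
    show ?thesis
    proof (intro exI allI impI)
      fix n assume n: "nat \<lceil>\<tau>\<rceil> + 1 \<le> n"
      show "W m n \<le> \<epsilon>" unfolding W_def
      proof (rule cSup_least[OF Ane])
        fix y assume "y \<in> A m n"
        moreover have "\<tau> \<le> real n - 1" using n by linarith
        ultimately show "y \<le> \<epsilon>" unfolding A_def using that \<tau> by auto
      qed
    qed
  qed
  define l where "l m t = interp (W m) t" for m t
  have l_ge: "W m (Suc (nat \<lfloor>t\<rfloor>)) \<le> l m t" if "0 \<le> t" for m t
    using interp_between(1)[OF that, of "W m"] W3[of m "nat \<lfloor>t\<rfloor>"] unfolding l_def by linarith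
  have l_le: "l m t \<le> W m (nat \<lfloor>t\<rfloor>)" if "0 \<le> t" for m t
    using interp_between(2)[OF that, of "W m"] W3[of m "nat \<lfloor>t\<rfloor>"] unfolding l_def by linarith
  have l_nn: "0 \<le> l m t" if "0 \<le> t" for m t
    using l_ge[OF that, of m] W0[of m] by (meson order_trans)
  have l_mono: "l m t \<le> l m' t" if "m \<le> m'" "0 \<le> t" for m m' t
    unfolding l_def using that W2 by (intro interp_mono_seq) auto
  have l_anti: "l m t \<le> l m s" if "s \<le> t" for m s t
    unfolding l_def using that W3 by (intro interp_antimono) auto
  have l_cont: "continuous_on UNIV (l m)" for m
    unfolding l_def using interp_cont[of "W m"] by (simp add: fun_eq_iff)
  define G where "G r t = interp (\<lambda>m. l (Suc m) t) r" for r t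
  have G_ge: "l (Suc (nat \<lfloor>r\<rfloor>)) t \<le> G r t" if "0 \<le> r" "0 \<le> t" for r t
    using interp_between(1)[OF that(1), of "\<lambda>m. l (Suc m) t"] l_mono[of "Suc (nat \<lfloor>r\<rfloor>)" "Suc (Suc (nat \<lfloor>r\<rfloor>))" t] that
    unfolding G_def by linarith
  have G_le: "G r t \<le> l (Suc (Suc (nat \<lfloor>r\<rfloor>))) t" if "0 \<le> r" "0 \<le> t" for r t
    using interp_between(2)[OF that(1), of "\<lambda>m. l (Suc m) t"] l_mono[of "Suc (nat \<lfloor>r\<rfloor>)" "Suc (Suc (nat \<lfloor>r\<rfloor>))" t] that
    unfolding G_def by linarith
  have G_nn: "0 \<le> G r t" if "0 \<le> r" "0 \<le> t" for r t
    using G_ge[OF that] l_nn[OF that(2)] by (meson order_trans)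
  have G_mono: "G r t \<le> G r' t" if "r \<le> r'" "0 \<le> t" for r r' t
    unfolding G_def using that l_mono by (intro interp_mono) auto
  have G_anti: "G r t \<le> G r s" if "0 \<le> r" "s \<le> t" for r s t
    unfolding G_def using that l_anti by (intro interp_mono_seq) auto
  have G_cont_r: "continuous_on UNIV (\<lambda>r. G r t)" for t
    unfolding G_def using interp_cont by (simp add: fun_eq_iff)
  have G_cont_t: "continuous_on UNIV (\<lambda>t. G r t)" if "0 \<le> r" for r
  proof -
    define k where "k = nat \<lfloor>r\<rfloor>"
    have "continuous_on UNIV (\<lambda>t. (real k + 1 - r) * l (Suc k) t + (r - real k) * l (Suc (Suc k)) t)"
      by (intro continuous_intros continuous_on_compose2[OF l_cont, of UNIV "\<lambda>t. t", simplified]) 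
    moreover have "G r t = (real k + 1 - r) * l (Suc k) t + (r - real k) * l (Suc (Suc k)) t" for t
      unfolding G_def k_def by (rule interp_floor[OF that])
    ultimately show ?thesis by simp
  qed
  define \<beta> where "\<beta> r t = min (\<sigma> r) (G r t) + r * exp (- t)" for r t
  have bound: "\<forall>p\<in>S. v p \<le> \<beta> (nx p) (tm p)"
  proof
    fix p assume p: "p \<in> S"
    define r where "r = nx p"
    define t where "t = tm p"
    have r: "0 \<le> r" and t: "0 \<le> t" using nn[OF p] by (auto simp: r_def t_def)
    have "v p \<le> W (Suc (nat \<lfloor>r\<rfloor>)) (Suc (nat \<lfloor>t\<rfloor>))"
    proof (rule W5[OF p])
      show "nx p \<le> real (Suc (nat \<lfloor>r\<rfloor>))" using r unfolding r_def by linarith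
      show "real (Suc (nat \<lfloor>t\<rfloor>)) - 1 \<le> tm p" using t unfolding t_def by linarith
    qed
    also have "\<dots> \<le> G r t" using l_ge[OF t] G_ge[OF r t] by (meson order_trans)
    finally have "v p \<le> min (\<sigma> r) (G r t)" using bnd[OF p] by (simp add: r_def)
    moreover have "0 \<le> r * exp (- t)" using r by simp
    ultimately show "v p \<le> \<beta> (nx p) (tm p)" unfolding \<beta>_def r_def[symmetric] t_def[symmetric] by linarith
  qed
  have KL: "class_KL \<beta>"
    unfolding class_KL_def
  proof safe
    fix t :: real assume t: "0 \<le> t"
    show "class_K (\<lambda>r. \<beta> r t)"
      unfolding class_K_def
    proof safe
      show "continuous_on {0..} (\<lambda>r. \<beta> r t)" unfolding \<beta>_def
        using sig continuous_on_subset[OF G_cont_r[of t], of "{0..}"]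
        by (auto simp: class_K_def intro!: continuous_intros)
      show "\<beta> 0 t = 0" unfolding \<beta>_def using sig G_nn[of 0 t] t by (simp add: class_K_def)
      show "strict_mono_on {0..} (\<lambda>r. \<beta> r t)"
      proof (rule strict_mono_onI)
        fix r r' :: real assume "r \<in> {0..}" "r' \<in> {0..}" "r < r'"
        then have "min (\<sigma> r) (G r t) \<le> min (\<sigma> r') (G r' t)" "r * exp (- t) < r' * exp (- t)"
          using K_mono[OF sig, of r r'] G_mono[of r r' t] t by auto
        then show "\<beta> r t < \<beta> r' t" unfolding \<beta>_def by linarith
      qed
    qed
  next
    fix r :: real assume r: "0 < r"
    show "class_L (\<lambda>t. \<beta> r t)"
      unfolding class_L_def
    proof safe
      show "continuous_on {0..} (\<lambda>t. \<beta> r t)" unfolding \<beta>_def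
        using continuous_on_subset[OF G_cont_t[of r], of "{0..}"] r
        by (auto intro!: continuous_intros)
      show "strict_antimono_on {0..} (\<lambda>t. \<beta> r t)"
        unfolding monotone_on_def
      proof (intro ballI impI)
        fix s t :: real assume "s \<in> {0..}" "t \<in> {0..}" "s < t"
        then have "min (\<sigma> r) (G r t) \<le> min (\<sigma> r) (G r s)" "r * exp (- t) < r * exp (- s)"
          using G_anti[of r s t] r by auto
        then show "\<beta> r t < \<beta> r s" unfolding \<beta>_def by linarith
      qed
      have exp0: "((\<lambda>t. r * exp (- t)) \<longlongrightarrow> 0) at_top"
        using tendsto_mult_right_zero[of "\<lambda>x. exp (- x)" at_top r]
        by (simp add: filterlim_compose[OF exp_at_bot filterlim_uminus_at_bot_at_top])
      show "((\<lambda>t. \<beta> r t) \<longlongrightarrow> 0) at_top"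
      proof (rule order_tendstoI)
        fix a :: real assume a0: "a < 0"
        show "\<forall>\<^sub>F t in at_top. a < \<beta> r t"
          using eventually_ge_at_top[of "0::real"]
        proof eventually_elim
          case (elim t)
          then show ?case unfolding \<beta>_def using G_nn[of r t] r K_nonneg[OF sig, of r] a0
            by (smt (verit) exp_ge_zero mult_nonneg_nonneg)
        qed
      next
        fix a :: real assume a: "0 < a"
        define k where "k = nat \<lfloor>r\<rfloor>"
        obtain N where N: "\<forall>n\<ge>N. W (Suc (Suc k)) n \<le> a / 2" using W4[of "a/2"] a by auto
        have ev1: "\<forall>\<^sub>F t in at_top. r * exp (- t) < a / 2"
          using order_tendstoD(2)[OF exp0, of "a/2"] a by simp
        show "\<forall>\<^sub>F t in at_top. \<beta> r t < a"
          using ev1 eventually_ge_at_top[of "real N"]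
        proof eventually_elim
          case (elim t)
          then have t: "0 \<le> t" "N \<le> nat \<lfloor>t\<rfloor>" by linarith+
          have "min (\<sigma> r) (G r t) \<le> G r t" by simp
          also have "\<dots> \<le> l (Suc (Suc k)) t" using G_le[of r t] r t unfolding k_def by simp
          also have "\<dots> \<le> W (Suc (Suc k)) (nat \<lfloor>t\<rfloor>)" using l_le t by simp
          also have "\<dots> \<le> a / 2" using N t by simp
          finally show ?case using elim unfolding \<beta>_def by linarith
        qed
      qed
    qed
  qed
  show ?thesis using KL bound by blast
qed

context
  fixes T :: "real set"
    and Uset :: "(real \<Rightarrow> 'u::real_vector) set"
    and nU :: "(real \<Rightarrow> 'u) \<Rightarrow> real"
    and \<phi> :: "real \<Rightarrow> 'x::real_normed_vector \<Rightarrow> (real \<Rightarrow> 'u) \<Rightarrow> 'x"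
  assumes fc: "fc_control_system T Uset nU \<phi>"
begin

lemma fc_T: "T = \<nat> \<or> T = {0..}" using fc unfolding fc_control_system_def by (elim conjE) assumption

lemma fc_T0: "0 \<in> T" using fc_T by auto

lemma fc_Tnn:
  assumes "t \<in> T" shows "0 \<le> t"
  using fc_T
proof
  assume "T = \<nat>" with assms have "t \<in> \<nat>" by simp
  then show ?thesis by (rule Nats_cases) simp
next
  assume "T = {0..}" with assms show ?thesis by simp
qed

lemma fc_Tnat: "real n \<in> T" using fc_T by auto

lemma fc_Tdiff:
  assumes "t \<in> T" "s \<in> T" "s \<le> t" shows "t - s \<in> T"
  using fc_T
proof
  assume T: "T = \<nat>"
  with assms have "t \<in> \<nat>" "s \<in> \<nat>" by simp_all
  then obtain a b where ab: "t = real a" "s = real b" by (auto elim!: Nats_cases)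
  with assms have "b \<le> a" by simp
  then have "t - s = real (a - b)" using ab by (simp add: of_nat_diff)
  then show ?thesis using T by simp
next
  assume "T = {0..}" with assms show ?thesis by simp
qed

lemma fc_nU: "u \<in> Uset \<Longrightarrow> 0 \<le> nU u"
proof -
  have "\<forall>u\<in>Uset. nU u \<ge> 0" using fc unfolding fc_control_system_def by (elim conjE) assumption
  then show "u \<in> Uset \<Longrightarrow> 0 \<le> nU u" by blast
qed

lemma fc_phi0: "u \<in> Uset \<Longrightarrow> \<phi> 0 x u = x"
proof -
  have "\<forall>x. \<forall>u\<in>Uset. \<phi> 0 x u = x" using fc unfolding fc_control_system_def by (elim conjE) assumption
  then show "u \<in> Uset \<Longrightarrow> \<phi> 0 x u = x" by blast
qed

lemma fc_shift: "u \<in> Uset \<Longrightarrow> \<tau> \<in> T \<Longrightarrow> shift_inp T \<tau> u \<in> Uset \<and> nU (shift_inp T \<tau> u) \<le> nU u"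
proof -
  have "\<forall>u\<in>Uset. \<forall>\<tau>\<in>T. shift_inp T \<tau> u \<in> Uset \<and> nU (shift_inp T \<tau> u) \<le> nU u"
    using fc unfolding fc_control_system_def by (elim conjE) assumption
  then show "u \<in> Uset \<Longrightarrow> \<tau> \<in> T \<Longrightarrow> shift_inp T \<tau> u \<in> Uset \<and> nU (shift_inp T \<tau> u) \<le> nU u" by blast
qed

lemma fc_cocycle: "t \<in> T \<Longrightarrow> s \<in> T \<Longrightarrow> u \<in> Uset \<Longrightarrow> \<phi> (t + s) x u = \<phi> s (\<phi> t x u) (shift_inp T t u)"
proof -
  have "\<forall>t\<in>T. \<forall>s\<in>T. \<forall>x. \<forall>u\<in>Uset. \<phi> (t + s) x u = \<phi> s (\<phi> t x u) (shift_inp T t u)"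
    using fc unfolding fc_control_system_def by (elim conjE) assumption
  then show "t \<in> T \<Longrightarrow> s \<in> T \<Longrightarrow> u \<in> Uset \<Longrightarrow> \<phi> (t + s) x u = \<phi> s (\<phi> t x u) (shift_inp T t u)" by blast
qed

end

context
  fixes T :: "real set"
    and Uset :: "(real \<Rightarrow> 'u::real_vector) set"
    and nU :: "(real \<Rightarrow> 'u) \<Rightarrow> real"
    and \<phi> :: "real \<Rightarrow> 'x::real_normed_vector \<Rightarrow> (real \<Rightarrow> 'u) \<Rightarrow> 'x"
    and h :: "'x \<Rightarrow> 'u \<Rightarrow> 'y::real_normed_vector"
  assumes fc: "fc_control_system T Uset nU \<phi>"
begin

lemma outp0: "u \<in> Uset \<Longrightarrow> outp \<phi> h 0 x u = h x (u 0)"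
  by (simp add: outp_def fc_phi0[OF fc])

lemma IOS_OUAG: "IOS T Uset nU \<phi> h \<Longrightarrow> OUAG T Uset nU \<phi> h"
proof -
  assume "IOS T Uset nU \<phi> h"
  then obtain \<beta> \<gamma> where KL: "class_KL \<beta>" and g: "class_Kinf \<gamma>"
    and b: "\<forall>x. \<forall>u\<in>Uset. \<forall>t\<in>T. norm (outp \<phi> h t x u) \<le> \<beta> (norm x) t + \<gamma> (nU u)"
    unfolding IOS_def by blast
  show "OUAG T Uset nU \<phi> h" unfolding OUAG_def
  proof (rule exI[of _ \<gamma>], intro conjI allI impI)
    show "class_Kinf \<gamma>" by fact
    fix \<epsilon> r s :: real assume e: "\<epsilon> > 0" and r: "r > 0" and s: "s > 0"
    have "((\<lambda>t. \<beta> r t) \<longlongrightarrow> 0) at_top" using KL r by (simp add: class_KL_def class_L_def)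
    then have "\<forall>\<^sub>F t in at_top. \<beta> r t < \<epsilon>" using e by (simp add: order_tendstoD(2))
    then obtain N where N: "\<And>t. t \<ge> N \<Longrightarrow> \<beta> r t < \<epsilon>" unfolding eventually_at_top_linorder by blast
    define \<tau> where "\<tau> = real (nat \<lceil>N\<rceil>)"
    have "\<tau> \<in> T" unfolding \<tau>_def by (rule fc_Tnat[OF fc])
    moreover have "norm (outp \<phi> h t x u) \<le> \<epsilon> + \<gamma> (nU u)"
      if "u \<in> Uset" "t \<in> T" "norm x < r" "nU u < s" "\<tau> \<le> t" for x u t
    proof -
      have t0: "0 \<le> t" using fc_Tnn[OF fc that(2)] .
      have cK: "class_K (\<lambda>r. \<beta> r t)" using KL t0 by (simp add: class_KL_def)
      have "\<beta> (norm x) t \<le> \<beta> r t" using K_mono[OF cK, of "norm x" r] that(3) by simp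
      moreover have "\<beta> r t < \<epsilon>" using N[of t] that(5) unfolding \<tau>_def by linarith
      moreover have "norm (outp \<phi> h t x u) \<le> \<beta> (norm x) t + \<gamma> (nU u)" using b that(1,2) by blast
      ultimately show ?thesis by linarith
    qed
    ultimately show "\<exists>\<tau>\<in>T. \<forall>x. \<forall>u\<in>Uset. \<forall>t\<in>T. norm x < r \<longrightarrow> nU u < s \<longrightarrow> \<tau> \<le> t \<longrightarrow>
        norm (outp \<phi> h t x u) \<le> \<epsilon> + \<gamma> (nU u)" by blast
  qed
qed

lemma IOS_Kb: "IOS T Uset nU \<phi> h \<Longrightarrow> K_bounded Uset nU h"
proof -
  assume "IOS T Uset nU \<phi> h"
  then obtain \<beta> \<gamma> where KL: "class_KL \<beta>" and g: "class_Kinf \<gamma>"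
    and b: "\<forall>x. \<forall>u\<in>Uset. \<forall>t\<in>T. norm (outp \<phi> h t x u) \<le> \<beta> (norm x) t + \<gamma> (nU u)"
    unfolding IOS_def by blast
  have "class_K (\<lambda>r. \<beta> r 0)" using KL by (simp add: class_KL_def)
  moreover have "norm (h x (u 0)) \<le> \<beta> (norm x) 0 + \<gamma> (nU u)" if "u \<in> Uset" for x u
  proof -
    have "norm (outp \<phi> h 0 x u) \<le> \<beta> (norm x) 0 + \<gamma> (nU u)" using b fc_T0[OF fc] that by blast
    then show ?thesis using outp0[OF that, of x] by simp
  qed
  ultimately show ?thesis unfolding K_bounded_def using Kinf_K[OF g] by blast
qed

lemma OUAG_OULIM: "OUAG T Uset nU \<phi> h \<Longrightarrow> OULIM T Uset nU \<phi> h"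
proof -
  assume "OUAG T Uset nU \<phi> h"
  then obtain \<gamma> where g: "class_Kinf \<gamma>" and H: "\<forall>\<epsilon>>0. \<forall>r>0. \<forall>s>0. \<exists>\<tau>\<in>T. \<forall>x. \<forall>u\<in>Uset. \<forall>t\<in>T.
        norm x < r \<longrightarrow> nU u < s \<longrightarrow> t \<ge> \<tau> \<longrightarrow> norm (outp \<phi> h t x u) \<le> \<epsilon> + \<gamma> (nU u)"
    unfolding OUAG_def by blast
  show ?thesis unfolding OULIM_def
  proof (intro exI conjI allI impI)
    show "class_Kinf \<gamma>" by fact
    fix \<epsilon> r s :: real assume "\<epsilon> > 0" "r > 0" "s > 0"
    with H obtain \<tau> where "\<tau> \<in> T" and \<tau>: "\<forall>x. \<forall>u\<in>Uset. \<forall>t\<in>T.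
        norm x < r \<longrightarrow> nU u < s \<longrightarrow> t \<ge> \<tau> \<longrightarrow> norm (outp \<phi> h t x u) \<le> \<epsilon> + \<gamma> (nU u)" by blast
    show "\<exists>\<tau>\<in>T. \<forall>x. \<forall>u\<in>Uset. norm x < r \<longrightarrow> nU u < s \<longrightarrow>
        (\<exists>t\<in>T. t \<le> \<tau> \<and> norm (outp \<phi> h t x u) \<le> \<epsilon> + \<gamma> (nU u))"
      using \<open>\<tau> \<in> T\<close> \<tau> by (intro bexI[of _ \<tau>]) auto
  qed
qed


lemma OL_bound:
  assumes OL: "class_Kinf \<sigma>" "class_Kinf \<gamma>"
      "\<forall>x. \<forall>u\<in>Uset. \<forall>t\<in>T. norm (outp \<phi> h t x u) \<le> \<sigma> (norm (outp \<phi> h 0 x u)) + \<gamma> (nU u)"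
    and KB: "class_K \<sigma>1" "class_K \<gamma>1" "\<forall>x. \<forall>u\<in>Uset. norm (h x (u 0)) \<le> \<sigma>1 (norm x) + \<gamma>1 (nU u)"
    and u: "u \<in> Uset" and t: "t \<in> T"
  shows "norm (outp \<phi> h t x u) \<le> \<sigma> (2 * \<sigma>1 (norm x)) + (\<sigma> (2 * \<gamma>1 (nU u)) + \<gamma> (nU u))"
proof -
  have sK: "class_K \<sigma>" using OL(1) by (rule Kinf_K)
  have nu: "0 \<le> nU u" using fc_nU[OF fc u] .
  have a: "0 \<le> \<sigma>1 (norm x)" using K_nonneg[OF KB(1)] by simp
  have b: "0 \<le> \<gamma>1 (nU u)" using K_nonneg[OF KB(2) nu] .
  have "norm (outp \<phi> h t x u) \<le> \<sigma> (norm (outp \<phi> h 0 x u)) + \<gamma> (nU u)" using OL(3) u t by blast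
  also have "\<sigma> (norm (outp \<phi> h 0 x u)) \<le> \<sigma> (\<sigma>1 (norm x) + \<gamma>1 (nU u))"
    using K_mono[OF sK, of "norm (outp \<phi> h 0 x u)" "\<sigma>1 (norm x) + \<gamma>1 (nU u)"] KB(3) u outp0[OF u, of x]
    by simp
  also have "\<dots> \<le> \<sigma> (2 * \<sigma>1 (norm x)) + \<sigma> (2 * \<gamma>1 (nU u))" by (rule K_split[OF sK a b])
  finally show ?thesis by simp
qed

lemma OUAG_IOS:
  assumes "OUAG T Uset nU \<phi> h" "OL T Uset nU \<phi> h" "K_bounded Uset nU h"
  shows "IOS T Uset nU \<phi> h"
proof -
  obtain \<gamma>a where ga: "class_Kinf \<gamma>a" and H: "\<forall>\<epsilon>>0. \<forall>r>0. \<forall>s>0. \<exists>\<tau>\<in>T. \<forall>x. \<forall>u\<in>Uset. \<forall>t\<in>T.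
        norm x < r \<longrightarrow> nU u < s \<longrightarrow> t \<ge> \<tau> \<longrightarrow> norm (outp \<phi> h t x u) \<le> \<epsilon> + \<gamma>a (nU u)"
    using assms(1) unfolding OUAG_def by blast
  obtain \<sigma> \<gamma> where OL: "class_Kinf \<sigma>" "class_Kinf \<gamma>"
      "\<forall>x. \<forall>u\<in>Uset. \<forall>t\<in>T. norm (outp \<phi> h t x u) \<le> \<sigma> (norm (outp \<phi> h 0 x u)) + \<gamma> (nU u)"
    using assms(2) unfolding OL_def by blast
  obtain \<sigma>1 \<gamma>1 where KB: "class_K \<sigma>1" "class_K \<gamma>1" "\<forall>x. \<forall>u\<in>Uset. norm (h x (u 0)) \<le> \<sigma>1 (norm x) + \<gamma>1 (nU u)"
    using assms(3) unfolding K_bounded_def by blast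
  define sh where "sh r = \<sigma> (2 * \<sigma>1 r)" for r
  define Aa where "Aa s = \<sigma> (2 * \<gamma>1 s) + \<gamma> s" for s
  define \<Gamma> where "\<Gamma> s = \<gamma>a s + 2 * Aa s" for s
  have sK: "class_K \<sigma>" using OL(1) by (rule Kinf_K)
  have shK: "class_K sh" unfolding sh_def by (intro K_comp[OF sK] K_scale[OF KB(1)]) simp
  have AaK: "class_Kinf Aa" unfolding Aa_def by (intro Kinf_add2[OF _ OL(2)] K_comp[OF sK] K_scale[OF KB(2)]) simp
  have GK: "class_Kinf \<Gamma>" unfolding \<Gamma>_def by (intro Kinf_add[OF ga] K_scale[OF Kinf_K[OF AaK]]) simp
  have B1: "norm (outp \<phi> h t x u) \<le> sh (norm x) + Aa (nU u)" if "u \<in> Uset" "t \<in> T" for t x u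
    using OL_bound[OF OL KB that] unfolding sh_def Aa_def .
  define S :: "(real \<times> 'x \<times> (real \<Rightarrow> 'u)) set" where "S = {(t, x, u). t \<in> T \<and> u \<in> Uset}"
  define v where "v p = (case p of (t, x, u) \<Rightarrow> norm (outp \<phi> h t x u) - \<Gamma> (nU u))" for p :: "real \<times> 'x \<times> (real \<Rightarrow> 'u)"
  define nx where "nx p = (case p of (t, x, u) \<Rightarrow> norm (x::'x))" for p :: "real \<times> 'x \<times> (real \<Rightarrow> 'u)"
  define tm where "tm p = (case p of (t, x, u) \<Rightarrow> (t::real))" for p :: "real \<times> 'x \<times> (real \<Rightarrow> 'u)"
  have "\<exists>\<beta>. class_KL \<beta> \<and> (\<forall>p\<in>S. v p \<le> \<beta> (nx p) (tm p))"
  proof (rule KL_bound[OF shK])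
    fix p assume "p \<in> S"
    then obtain t x u where p: "p = (t, x, u)" "t \<in> T" "u \<in> Uset" unfolding S_def by auto
    show "0 \<le> nx p \<and> 0 \<le> tm p" using p fc_Tnn[OF fc] by (simp add: nx_def tm_def)
    have "0 \<le> \<gamma>a (nU u)" "0 \<le> Aa (nU u)"
      using K_nonneg[OF Kinf_K[OF ga]] K_nonneg[OF Kinf_K[OF AaK]] fc_nU[OF fc p(3)] by auto
    then show "v p \<le> sh (nx p)" using B1[OF p(3,2), of x] p(1) unfolding v_def nx_def \<Gamma>_def by simp
  next
    fix \<epsilon> R :: real assume e: "\<epsilon> > 0"
    have "\<forall>\<^sub>F s in at_top. sh R \<le> \<gamma> s"
      using OL(2) unfolding class_Kinf_def by (simp add: filterlim_at_top)
    then obtain s0 where s0: "\<And>s. s \<ge> s0 \<Longrightarrow> sh R \<le> \<gamma> s" unfolding eventually_at_top_linorder by blast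
    define S0 where "S0 = max s0 0 + 1"
    have "\<exists>\<tau>\<in>T. \<forall>x. \<forall>u\<in>Uset. \<forall>t\<in>T. norm x < max R 0 + 1 \<longrightarrow> nU u < S0 \<longrightarrow> t \<ge> \<tau> \<longrightarrow>
        norm (outp \<phi> h t x u) \<le> \<epsilon> + \<gamma>a (nU u)"
      using H e unfolding S0_def by simp
    then obtain \<tau> where \<tau>: "\<forall>x. \<forall>u\<in>Uset. \<forall>t\<in>T. norm x < max R 0 + 1 \<longrightarrow> nU u < S0 \<longrightarrow> t \<ge> \<tau> \<longrightarrow>
        norm (outp \<phi> h t x u) \<le> \<epsilon> + \<gamma>a (nU u)" by blast
    show "\<exists>\<tau>. \<forall>p\<in>S. nx p \<le> R \<longrightarrow> \<tau> \<le> tm p \<longrightarrow> v p \<le> \<epsilon>"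
    proof (intro exI[of _ \<tau>] ballI impI)
      fix p assume "p \<in> S" and R: "nx p \<le> R" and tau: "\<tau> \<le> tm p"
      then obtain t x u where p: "p = (t, x, u)" "t \<in> T" "u \<in> Uset" unfolding S_def by auto
      have xR: "norm x \<le> R" and tt: "\<tau> \<le> t" using R tau p(1) by (auto simp: nx_def tm_def)
      have nu: "0 \<le> nU u" using fc_nU[OF fc p(3)] .
      have ga0: "0 \<le> \<gamma>a (nU u)" "0 \<le> Aa (nU u)"
        using K_nonneg[OF Kinf_K[OF ga]] K_nonneg[OF Kinf_K[OF AaK]] nu by auto
      have "norm (outp \<phi> h t x u) \<le> \<epsilon> + \<Gamma> (nU u)"
      proof (cases "nU u < S0")
        case True
        then have "norm (outp \<phi> h t x u) \<le> \<epsilon> + \<gamma>a (nU u)" using \<tau> p tt xR by force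
        then show ?thesis using ga0 unfolding \<Gamma>_def by simp
      next
        case False
        then have big: "s0 \<le> nU u" unfolding S0_def by simp
        have "norm (outp \<phi> h t x u) \<le> sh (norm x) + Aa (nU u)" using B1[OF p(3,2)] .
        also have "sh (norm x) \<le> sh R" using K_mono[OF shK, of "norm x" R] xR by simp
        also have "sh R \<le> \<gamma> (nU u)" using s0[OF big] .
        also have "\<gamma> (nU u) \<le> Aa (nU u)" unfolding Aa_def using K_nonneg[OF sK, of "2 * \<gamma>1 (nU u)"] K_nonneg[OF KB(2) nu] by simp
        finally show ?thesis using ga0 e unfolding \<Gamma>_def by simp
      qed
      then show "v p \<le> \<epsilon>" using p(1) unfolding v_def by simp
    qed
  qed
  then obtain \<beta> where KL: "class_KL \<beta>" and bd: "\<forall>p\<in>S. v p \<le> \<beta> (nx p) (tm p)" by blast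
  have "norm (outp \<phi> h t x u) \<le> \<beta> (norm x) t + \<Gamma> (nU u)" if "u \<in> Uset" "t \<in> T" for x u t
    using bd[rule_format, of "(t, x, u)"] that unfolding S_def v_def nx_def tm_def by simp
  then show ?thesis unfolding IOS_def using KL GK by blast
qed

lemma OULIM_OUAG:
  assumes "OULIM T Uset nU \<phi> h" "OL T Uset nU \<phi> h"
  shows "OUAG T Uset nU \<phi> h"
proof -
  obtain \<gamma>L where gL: "class_Kinf \<gamma>L" and H: "\<forall>\<epsilon>>0. \<forall>r>0. \<forall>s>0. \<exists>\<tau>\<in>T. \<forall>x. \<forall>u\<in>Uset.
        norm x < r \<longrightarrow> nU u < s \<longrightarrow>
        (\<exists>t\<in>T. t \<le> \<tau> \<and> norm (outp \<phi> h t x u) \<le> \<epsilon> + \<gamma>L (nU u))"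
    using assms(1) unfolding OULIM_def by blast
  obtain \<sigma> \<gamma> where OL: "class_Kinf \<sigma>" "class_Kinf \<gamma>"
      "\<forall>x. \<forall>u\<in>Uset. \<forall>t\<in>T. norm (outp \<phi> h t x u) \<le> \<sigma> (norm (outp \<phi> h 0 x u)) + \<gamma> (nU u)"
    using assms(2) unfolding OL_def by blast
  have sK: "class_K \<sigma>" using OL(1) by (rule Kinf_K)
  define \<Gamma> where "\<Gamma> s = \<sigma> (2 * \<gamma>L s) + \<gamma> s" for s
  have GK: "class_Kinf \<Gamma>" unfolding \<Gamma>_def
    by (intro Kinf_add2[OF _ OL(2)] K_comp[OF sK] K_scale[OF Kinf_K[OF gL]]) simp
  show ?thesis unfolding OUAG_def
  proof (rule exI[of _ \<Gamma>], intro conjI allI impI)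
    show "class_Kinf \<Gamma>" by fact
    fix \<epsilon> r s :: real assume e: "\<epsilon> > 0" and r: "r > 0" and s: "s > 0"
    have "continuous_on {0..} \<sigma>" using sK by (simp add: class_K_def)
    then obtain d where d: "d > 0" and dd: "\<And>x'. x' \<in> {0..} \<Longrightarrow> dist x' 0 < d \<Longrightarrow> dist (\<sigma> x') (\<sigma> 0) < \<epsilon>"
      using e unfolding continuous_on_iff by (meson atLeast_iff order_refl)
    define \<delta> where "\<delta> = d / 4"
    have \<delta>: "\<delta> > 0" "\<sigma> (2 * \<delta>) \<le> \<epsilon>"
    proof -
      show "\<delta> > 0" using d by (simp add: \<delta>_def)
      have "dist (\<sigma> (2 * \<delta>)) (\<sigma> 0) < \<epsilon>" using d by (intro dd) (auto simp: \<delta>_def)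
      then show "\<sigma> (2 * \<delta>) \<le> \<epsilon>" using sK by (simp add: class_K_def dist_real_def)
    qed
    obtain \<tau> where "\<tau> \<in> T" and \<tau>: "\<forall>x. \<forall>u\<in>Uset. norm x < r \<longrightarrow> nU u < s \<longrightarrow>
        (\<exists>t\<in>T. t \<le> \<tau> \<and> norm (outp \<phi> h t x u) \<le> \<delta> + \<gamma>L (nU u))"
      using H \<delta>(1) r s by blast
    have "norm (outp \<phi> h t x u) \<le> \<epsilon> + \<Gamma> (nU u)"
      if u: "u \<in> Uset" and t: "t \<in> T" and x: "norm x < r" and us: "nU u < s" and tt: "\<tau> \<le> t" for x u t
    proof -
      obtain t0 where t0: "t0 \<in> T" "t0 \<le> \<tau>" and y0: "norm (outp \<phi> h t0 x u) \<le> \<delta> + \<gamma>L (nU u)"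
        using \<tau> u x us by blast
      define w where "w = shift_inp T t0 u"
      define z where "z = \<phi> t0 x u"
      define t' where "t' = t - t0"
      have w: "w \<in> Uset" "nU w \<le> nU u" using fc_shift[OF fc u t0(1)] unfolding w_def by auto
      have t': "t' \<in> T" unfolding t'_def using fc_Tdiff[OF fc t t0(1)] t0 tt by simp
      have "\<phi> t x u = \<phi> (t0 + t') x u" by (simp add: t'_def)
      also have "\<dots> = \<phi> t' z w" unfolding z_def w_def by (rule fc_cocycle[OF fc t0(1) t' u])
      finally have phi: "\<phi> t x u = \<phi> t' z w" .
      have wt: "w t' = u t" using t' unfolding w_def shift_inp_def t'_def by simp
      have w0: "w 0 = u t0" using fc_T0[OF fc] unfolding w_def shift_inp_def by simp
      have o1: "outp \<phi> h t x u = outp \<phi> h t' z w" unfolding outp_def phi wt ..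
      have o0: "outp \<phi> h 0 z w = outp \<phi> h t0 x u"
        unfolding outp_def fc_phi0[OF fc w(1)] w0 z_def ..
      have nu: "0 \<le> nU u" "0 \<le> nU w" using fc_nU[OF fc] u w(1) by auto
      have "norm (outp \<phi> h t x u) \<le> \<sigma> (norm (outp \<phi> h 0 z w)) + \<gamma> (nU w)"
        unfolding o1 using OL(3) w(1) t' by blast
      also have "\<gamma> (nU w) \<le> \<gamma> (nU u)" using K_mono[OF Kinf_K[OF OL(2)]] nu w(2) by blast
      also have "\<sigma> (norm (outp \<phi> h 0 z w)) \<le> \<sigma> (\<delta> + \<gamma>L (nU u))"
        unfolding o0 using K_mono[OF sK, of "norm (outp \<phi> h t0 x u)"] y0 by simp
      also have "\<dots> \<le> \<sigma> (2 * \<delta>) + \<sigma> (2 * \<gamma>L (nU u))"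
        using K_split[OF sK, of \<delta> "\<gamma>L (nU u)"] \<delta>(1) K_nonneg[OF Kinf_K[OF gL] nu(1)] by simp
      finally show ?thesis using \<delta>(2) unfolding \<Gamma>_def by simp
    qed
    then show "\<exists>\<tau>\<in>T. \<forall>x. \<forall>u\<in>Uset. \<forall>t\<in>T. norm x < r \<longrightarrow> nU u < s \<longrightarrow> \<tau> \<le> t \<longrightarrow>
        norm (outp \<phi> h t x u) \<le> \<epsilon> + \<Gamma> (nU u)" using \<open>\<tau> \<in> T\<close> by blast
  qed
qed

end



theorem proposition2:
  fixes T :: "real set"
    and Uset :: "(real \<Rightarrow> 'u::real_vector) set"
    and nU :: "(real \<Rightarrow> 'u) \<Rightarrow> real"
    and \<phi> :: "real \<Rightarrow> 'x::real_normed_vector \<Rightarrow> (real \<Rightarrow> 'u) \<Rightarrow> 'x"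
    and h :: "'x \<Rightarrow> 'u \<Rightarrow> 'y::real_normed_vector"
  assumes "fc_control_system T Uset nU \<phi>"
  shows "(IOS T Uset nU \<phi> h \<and> OL T Uset nU \<phi> h
            \<longleftrightarrow> OUAG T Uset nU \<phi> h \<and> OL T Uset nU \<phi> h \<and> K_bounded Uset nU h)
       \<and> (OUAG T Uset nU \<phi> h \<and> OL T Uset nU \<phi> h \<and> K_bounded Uset nU h
            \<longleftrightarrow> OULIM T Uset nU \<phi> h \<and> OL T Uset nU \<phi> h \<and> K_bounded Uset nU h)"
  using IOS_OUAG[OF assms, of h] IOS_Kb[OF assms, of h] OUAG_IOS[OF assms, of h]
    OUAG_OULIM[OF assms, of h] OULIM_OUAG[OF assms, of h]
  by blast

end
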